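(* Let $p\ge3$ be real and $k_p=[(p+1)/2]$ (integer part). Then $$\sum_{k=1}^{k_p}\binom pk\mathrm B(k,p-k)\le4\log p.$$ More generally, for every $a>1$ there is a constant $0<C_a<\infty$ depending only on $a$ such that for all $p\ge3$, $$\sum_{k=1}^{k_p}\binom pk\mathrm B(ak,a(p-k))\le C_a(ap)^{1-a},\qquad\sum_{k=0}^{k_p-1}\binom{p-2}{k}\mathrm B(a(k+1),a(p-k-1))\le C_a(ap)^{-a}.$$
   Context: $\mathrm B(x,y)=\int_0^1t^{x-1}(1-t)^{y-1}dt$ is the beta function. For real $p$ and integer $k\ge1$, $\binom pk=\frac{p(p-1)\cdots(p-k+1)}{k!}$, and $\binom p0=1$. *)

theory Defs
  imports "HOL-Analysis.Analysis"
begin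

end

theory Submission
  imports Defs
begin


lemma idx_bound:
  fixes p :: real assumes "p \<ge> 3" "k \<le> nat \<lfloor>(p + 1) / 2\<rfloor>"
  shows "real k \<le> (p + 1) / 2"
proof -
  have "\<lfloor>(p + 1) / 2\<rfloor> \<ge> 0" using assms by simp
  hence "int k \<le> \<lfloor>(p + 1) / 2\<rfloor>" using assms le_nat_iff by blast
  thus ?thesis by (metis floor_of_nat le_floor_iff of_int_of_nat_eq)
qed

lemma gbin_beta1:
  fixes p :: real assumes "p > 0" "k \<ge> 1" "real k < p"
  shows "(p gchoose k) * Beta (real k) (p - real k) = p / (real k * (p - real k))"
proof -
  have z: "p + 1 \<notin> \<int>\<^sub>\<le>\<^sub>0" using assms by (auto elim!: nonpos_Ints_cases)
  have g: "(p gchoose k) = Gamma (p + 1) / (fact k * Gamma (p - real k + 1))"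
    using gbinomial_Gamma[OF z] by simp
  obtain m where m: "k = Suc m" using assms by (cases k) auto
  have gk: "Gamma (real k) = fact m" using Gamma_fact[of m] m by simp
  have fk: "fact k = real k * fact m" using m by simp
  have g1: "Gamma (p + 1) = p * Gamma p" using Gamma_plus1[of p] assms nonpos_Ints_nonpos[of p] by force
  have g2: "Gamma (p - real k + 1) = (p - real k) * Gamma (p - real k)" using Gamma_plus1[of "p - real k"] assms nonpos_Ints_nonpos[of "p - real k"] by force
  have pos: "Gamma p > 0" "Gamma (p - real k) > 0" "fact m > (0::real)" using assms by (auto intro!: Gamma_real_pos)
  have ne: "Gamma p \<noteq> 0" "Gamma (p - real k) \<noteq> 0" "fact m \<noteq> (0::real)" "p - real k \<noteq> 0" "real k \<noteq> 0"
    using pos assms by linarith+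
  show ?thesis unfolding g Beta_def g1 g2 gk fk using ne by (simp add: field_simps)
qed

lemma gbin_beta2:
  fixes p :: real assumes "p > 1" "j \<ge> 1" "real j < p"
  shows "((p - 2) gchoose (j - 1)) * Beta (real j) (p - real j) = 1 / (p - 1)"
proof -
  have z: "p - 2 + 1 \<notin> \<int>\<^sub>\<le>\<^sub>0" using assms by (auto elim!: nonpos_Ints_cases)
  obtain m where m: "j = Suc m" using assms by (cases j) auto
  have g: "((p - 2) gchoose (j - 1)) = Gamma (p - 1) / (fact m * Gamma (p - real j))"
    using gbinomial_Gamma[OF z, of m] m by (simp add: algebra_simps)
  have gk: "Gamma (real j) = fact m" using Gamma_fact[of m] m by simp
  have g1: "Gamma p = (p - 1) * Gamma (p - 1)" using Gamma_plus1[of "p - 1"] assms nonpos_Ints_nonpos[of "p - 1"] by force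
  have pos: "Gamma (p - 1) > 0" "Gamma (p - real j) > 0" "fact m > (0::real)" using assms by (auto intro!: Gamma_real_pos)
  have ne: "Gamma p \<noteq> 0" "Gamma (p - real j) \<noteq> 0" "fact m \<noteq> (0::real)" "Gamma (p - 1) \<noteq> 0" "p - 1 \<noteq> 0"
    using pos assms g1 by (simp_all, linarith+)
  have "((p - 2) gchoose (j - 1)) * Beta (real j) (p - real j)
     = Gamma (p - 1) / (fact m * Gamma (p - real j)) * (fact m * Gamma (p - real j) / Gamma p)"
    unfolding g Beta_def gk by simp
  also have "\<dots> = Gamma (p - 1) / Gamma p" using ne by (simp add: field_simps)
  also have "\<dots> = 1 / (p - 1)" unfolding g1 using ne by (simp add: field_simps)
  finally show ?thesis .
qed

lemma gbin_nonneg1: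
  fixes p :: real assumes "p > 0" "real k < p"
  shows "(p gchoose k) \<ge> 0"
proof -
  have z: "p + 1 \<notin> \<int>\<^sub>\<le>\<^sub>0" using assms by (auto elim!: nonpos_Ints_cases)
  have "Gamma (p + 1) > 0" "Gamma (p - real k + 1) > 0" using assms by (auto intro!: Gamma_real_pos)
  thus ?thesis using gbinomial_Gamma[OF z, of k] by simp
qed

lemma gbin_nonneg2:
  fixes p :: real assumes "p > 1" "j \<ge> 1" "real j < p"
  shows "((p - 2) gchoose (j - 1)) \<ge> 0"
proof -
  have z: "p - 2 + 1 \<notin> \<int>\<^sub>\<le>\<^sub>0" using assms by (auto elim!: nonpos_Ints_cases)
  have "Gamma (p - 1) > 0" "Gamma (p - real j) > 0" using assms by (auto intro!: Gamma_real_pos)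
  moreover have "p - 2 - real (j - 1) + 1 = p - real j" using assms by simp
  ultimately show ?thesis using gbinomial_Gamma[OF z, of "j-1"] by simp
qed

lemma g_bound:
  fixes p t :: real assumes "0 < t" "t < 1" "k \<ge> 1" "real k < p"
  shows "t powr real k * (1 - t) powr (p - real k) \<le> (real k / p) ^ k"
proof -
  have p: "p > 0" using assms by linarith
  have gpos: "t powr real k * (1 - t) powr (p - real k) > 0" using assms by simp
  have "ln (t powr real k * (1 - t) powr (p - real k)) = real k * ln t + (p - real k) * ln (1 - t)"
    using assms by (simp add: ln_mult ln_powr)
  also have "\<dots> \<le> real k * ln (real k / p)"
  proof -
    have "ln (t * p / real k) \<le> t * p / real k - 1" using assms p by (intro ln_le_minus_one) auto
    moreover have "ln (1 - t) \<le> - t" using assms ln_le_minus_one[of "1-t"] by simp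
    moreover have "ln (t * p / real k) = ln t - ln (real k / p)" using assms p by (simp add: ln_div ln_mult)
    ultimately have "real k * (ln t - ln (real k / p)) + (p - real k) * ln (1 - t) \<le> real k * (t * p / real k - 1) + (p - real k) * (-t)"
      using assms by (intro add_mono mult_left_mono) auto
    also have "\<dots> = - real k * (1 - t)" using assms by (simp add: field_simps)
    also have "\<dots> \<le> 0" using assms by simp
    finally show ?thesis by (simp add: algebra_simps)
  qed
  also have "\<dots> = ln ((real k / p) ^ k)" using assms p by (simp add: ln_realpow)
  finally show ?thesis using gpos assms p by (subst (asm) ln_le_cancel_iff) auto
qed

lemma beta_cmp:
  fixes p a :: real assumes "a > 1" "k \<ge> 1" "real k < p"
  shows "Beta (a * real k) (a * (p - real k)) \<le> ((real k / p) ^ k) powr (a - 1) * Beta (real k) (p - real k)"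
proof -
  define M where "M = ((real k / p) ^ k) powr (a - 1)"
  have i1: "((\<lambda>t. t powr (a * real k - 1) * (1 - t) powr (a * (p - real k) - 1)) has_integral Beta (a * real k) (a * (p - real k))) {0..1}"
    using assms by (intro has_integral_Beta_real) auto
  have i2: "((\<lambda>t. M * (t powr (real k - 1) * (1 - t) powr (p - real k - 1))) has_integral M * Beta (real k) (p - real k)) {0..1}"
    using assms by (intro has_integral_mult_right has_integral_Beta_real) auto
  have "Beta (a * real k) (a * (p - real k)) \<le> M * Beta (real k) (p - real k)"
  proof (rule has_integral_le[OF i1 i2])
    fix t :: real assume t: "t \<in> {0..1}"
    show "t powr (a * real k - 1) * (1 - t) powr (a * (p - real k) - 1) \<le> M * (t powr (real k - 1) * (1 - t) powr (p - real k - 1))"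
    proof (cases "t = 0 \<or> t = 1")
      case True thus ?thesis by auto
    next
      case False
      hence t': "0 < t" "t < 1" using t by auto
      have e1: "t powr (a * real k - 1) = (t powr real k) powr (a - 1) * t powr (real k - 1)"
        by (simp add: powr_powr powr_add[symmetric] algebra_simps)
      have e2: "(1 - t) powr (a * (p - real k) - 1) = ((1 - t) powr (p - real k)) powr (a - 1) * (1 - t) powr (p - real k - 1)"
        by (simp add: powr_powr powr_add[symmetric] algebra_simps)
      have e3: "(t powr real k) powr (a - 1) * ((1 - t) powr (p - real k)) powr (a - 1) = (t powr real k * (1 - t) powr (p - real k)) powr (a - 1)"
        using t' by (simp add: powr_mult)
      have le: "(t powr real k * (1 - t) powr (p - real k)) powr (a - 1) \<le> M"
        unfolding M_def using g_bound[OF t' assms(2,3)] assms t' by (intro powr_mono2) auto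
      have "t powr (a * real k - 1) * (1 - t) powr (a * (p - real k) - 1)
          = (t powr real k * (1 - t) powr (p - real k)) powr (a - 1) * (t powr (real k - 1) * (1 - t) powr (p - real k - 1))"
        unfolding e1 e2 e3[symmetric] by (simp add: algebra_simps)
      also have "\<dots> \<le> M * (t powr (real k - 1) * (1 - t) powr (p - real k - 1))"
        using le by (intro mult_right_mono) auto
      finally show ?thesis .
    qed
  qed
  thus ?thesis unfolding M_def .
qed

lemma M_bound:
  fixes p a :: real assumes "a > 1" "k \<ge> 1" "real k / p \<le> 2/3" "p > 0"
  shows "((real k / p) ^ k) powr (a - 1) \<le> p powr (1 - a) * (real k ^ nat \<lceil>a\<rceil> * ((2/3) powr (a - 1)) ^ k / (2/3) powr (a - 1))"
proof -
  define \<rho> where "\<rho> = (2/3::real) powr (a - 1)"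
  have rpos: "\<rho> > 0" unfolding \<rho>_def by simp
  obtain m where m: "k = Suc m" using assms by (cases k) auto
  have x0: "real k / p \<ge> 0" using assms by simp
  have "(real k / p) ^ k = (real k / p) * (real k / p) ^ m" using m by simp
  also have "\<dots> \<le> (real k / p) * (2/3) ^ m"
    using assms x0 by (intro mult_left_mono power_mono) auto
  finally have A: "(real k / p) ^ k \<le> (real k / p) * (2/3) ^ m" .
  have "((real k / p) ^ k) powr (a - 1) \<le> ((real k / p) * (2/3) ^ m) powr (a - 1)"
    using A x0 assms by (intro powr_mono2) auto
  also have "\<dots> = (real k / p) powr (a - 1) * ((2/3) ^ m) powr (a - 1)"
    by (rule powr_mult)
  also have "((2/3::real) ^ m) powr (a - 1) = \<rho> ^ m"
    unfolding \<rho>_def by (simp add: powr_realpow[symmetric] powr_powr powr_powr_swap mult.commute)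
  also have "(real k / p) powr (a - 1) = real k powr (a - 1) * p powr (1 - a)"
  proof -
    have "p powr (1 - a) = inverse (p powr (a - 1))" using powr_minus[of p "a-1"] by simp
    moreover have "(real k / p) powr (a - 1) = real k powr (a - 1) / p powr (a - 1)"
      using assms by (intro powr_divide)
    ultimately show ?thesis by (simp only: divide_inverse)
  qed
  also have "real k powr (a - 1) \<le> real k ^ nat \<lceil>a\<rceil>"
  proof -
    have "real k powr (a - 1) \<le> real k powr (real (nat \<lceil>a\<rceil>))"
      using assms by (intro powr_mono) linarith+
    also have "\<dots> = real k ^ nat \<lceil>a\<rceil>" using assms by (subst powr_realpow) auto
    finally show ?thesis .
  qed
  hence "real k powr (a - 1) * p powr (1 - a) * \<rho> ^ m \<le> real k ^ nat \<lceil>a\<rceil> * p powr (1 - a) * \<rho> ^ m"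
    using rpos by (intro mult_right_mono) auto
  also have "\<rho> ^ m = \<rho> ^ k / \<rho>" using m rpos by simp
  finally show ?thesis unfolding \<rho>_def by (simp add: algebra_simps)
qed

lemma summ_s:
  fixes x :: real assumes "0 \<le> x" "x < 1"
  shows "summable (\<lambda>k. real k ^ N * x ^ k)"
  using assms
proof (induction N arbitrary: x)
  case 0
  thus ?case by (simp add: summable_geometric)
next
  case (Suc N x)
  define r where "r = (1 + x) / 2"
  have r: "0 < r" "r < 1" "x < r" using Suc.prems unfolding r_def by auto
  have to0: "(\<lambda>n. of_nat n * (x / r) ^ n) \<longlonglongrightarrow> (0::real)"
    using r Suc.prems by (intro powser_times_n_limit_0) (simp add: divide_less_eq)
  obtain N0 where N0: "\<And>n. n \<ge> N0 \<Longrightarrow> norm (of_nat n * (x / r) ^ n - 0) < (1::real)"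
    using LIMSEQ_D[OF to0, of 1] by auto
  show ?case
  proof (rule summable_comparison_test')
    show "summable (\<lambda>n. real n ^ N * r ^ n)" using Suc.IH r by simp
    fix n assume n: "n \<ge> N0"
    have "real n * (x / r) ^ n < 1" using N0[OF n] Suc.prems r by simp
    hence "real n * x ^ n \<le> r ^ n" using r by (simp add: power_divide field_simps)
    hence "real n ^ N * (real n * x ^ n) \<le> real n ^ N * r ^ n" by (intro mult_left_mono) auto
    thus "norm (real n ^ Suc N * x ^ n) \<le> real n ^ N * r ^ n"
      using Suc.prems by (simp add: algebra_simps)
  qed
qed

lemma harm_sum: "(\<Sum>k=1..n. 1 / real k) = (harm n :: real)"
  by (induction n) (auto simp: harm_Suc harm_def divide_inverse)

lemma part1:
  fixes p :: real assumes p: "p \<ge> 3"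
  shows "(\<Sum>k=1..nat \<lfloor>(p + 1) / 2\<rfloor>. (p gchoose k) * Beta (real k) (p - real k)) \<le> 4 * ln p"
proof -
  define n where "n = nat \<lfloor>(p + 1) / 2\<rfloor>"
  have nle: "real n \<le> (p + 1) / 2" unfolding n_def using idx_bound[OF p] by simp
  have "2 \<le> \<lfloor>(p + 1) / 2\<rfloor>" using p by (simp add: le_floor_iff)
  hence n1: "n \<ge> 1" unfolding n_def by linarith
  have "(\<Sum>k=1..n. (p gchoose k) * Beta (real k) (p - real k)) \<le> (\<Sum>k=1..n. 1 / real k + 2 / (p - 1))"
  proof (rule sum_mono)
    fix k assume k: "k \<in> {1..n}"
    have kb: "real k \<le> (p + 1) / 2" using idx_bound[OF p, of k] k unfolding n_def by auto
    have k1: "k \<ge> 1" using k by auto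
    have "(p gchoose k) * Beta (real k) (p - real k) = p / (real k * (p - real k))"
      using gbin_beta1[of p k] kb k1 p by auto
    also have "\<dots> = 1 / real k + 1 / (p - real k)" using kb k1 p by (simp add: field_simps)
    also have "1 / (p - real k) \<le> 2 / (p - 1)" using kb p by (simp add: field_simps)
    finally show "(p gchoose k) * Beta (real k) (p - real k) \<le> 1 / real k + 2 / (p - 1)" by simp
  qed
  also have "\<dots> = harm n + real n * (2 / (p - 1))" unfolding sum.distrib harm_sum by simp
  also have "real n * (2 / (p - 1)) \<le> 2" using nle p by (simp add: field_simps)
  also have "harm n \<le> 1 + ln (real n)"
    using euler_mascheroni_sequence_decreasing[of 1 n] n1 by (simp add: harm_Suc harm_def)
  also have "ln (real n) \<le> ln p" using nle n1 p by (subst ln_le_cancel_iff) auto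
  also have "1 \<le> ln p"
  proof -
    have "exp 1 \<le> p" using exp_le p by linarith
    hence "ln (exp 1) \<le> ln p" using p by (subst ln_le_cancel_iff) auto
    thus ?thesis by simp
  qed
  hence "1 + ln p + 2 \<le> 4 * ln p" by linarith
  finally show ?thesis unfolding n_def by simp
qed

lemma div_aux: "(x::real) \<noteq> 0 \<Longrightarrow> x / X / x = inverse X"
  by (simp add: divide_inverse)

lemma div_aux2: "(X * (Y / r)) * (2 / (q::real)) = 2 / r * (X / q) * Y"
  by (simp add: field_simps)

lemma part2:
  fixes a :: real assumes a: "a > 1"
  shows "\<exists>C::real. C > 0 \<and> (\<forall>p::real. p \<ge> 3 \<longrightarrow>
            (\<Sum>k=1..nat \<lfloor>(p + 1) / 2\<rfloor>. (p gchoose k) * Beta (a * real k) (a * (p - real k)))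
              \<le> C * (a * p) powr (1 - a)
          \<and> (\<Sum>k=0..<nat \<lfloor>(p + 1) / 2\<rfloor>. ((p - 2) gchoose k) * Beta (a * (real k + 1)) (a * (p - real k - 1)))
              \<le> C * (a * p) powr (- a))"
proof -
  define \<rho> where "\<rho> = (2/3::real) powr (a - 1)"
  define N where "N = nat \<lceil>a\<rceil>"
  define s where "s = (\<lambda>k. real k ^ N * \<rho> ^ k)"
  have r0: "\<rho> > 0" unfolding \<rho>_def by simp
  have r1: "\<rho> < 1" unfolding \<rho>_def using a powr_less_mono2[of "a - 1" "2/3::real" 1] by simp
  have sum1: "summable s" unfolding s_def using summ_s[OF less_imp_le[OF r0] r1] .
  have sum2: "summable (\<lambda>k. s (Suc k))" using sum1 summable_Suc_iff by blast
  have s0: "\<And>k. s k \<ge> 0" unfolding s_def using r0 by simp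
  define S1 where "S1 = suminf s"
  define S2 where "S2 = suminf (\<lambda>k. s (Suc k))"
  have S1: "S1 \<ge> 0" unfolding S1_def using sum1 s0 by (rule suminf_nonneg)
  have S2: "S2 \<ge> 0" unfolding S2_def using sum2 s0 by (intro suminf_nonneg)
  define A1 where "A1 = a powr (1 - a)"
  define A2 where "A2 = a powr (- a)"
  have A1: "A1 > 0" "A2 > 0" unfolding A1_def A2_def using a by auto
  define C where "C = 3 * S1 / (\<rho> * A1) + 2 * S2 / (\<rho> * A2) + 1"
  have C1: "3 * S1 / \<rho> \<le> C * A1" unfolding C_def using A1 r0 S1 S2
    by (simp add: field_simps)
  have C2: "2 * S2 / \<rho> \<le> C * A2" unfolding C_def using A1 r0 S1 S2
    by (simp add: field_simps)
  have Cpos: "C > 0" unfolding C_def using A1 r0 S1 S2 by (simp add: add_nonneg_pos)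
  show ?thesis
  proof (intro exI[of _ C] conjI allI impI Cpos)
    fix p :: real assume p: "p \<ge> 3"
    define n where "n = nat \<lfloor>(p + 1) / 2\<rfloor>"
    have key: "\<And>k. k \<in> {1..n} \<Longrightarrow> real k \<le> (p + 1) / 2"
      using idx_bound[OF p] unfolding n_def by auto
    have Mb: "((real k / p) ^ k) powr (a - 1) \<le> p powr (1 - a) * (s k / \<rho>)" if k: "k \<in> {1..n}" for k
    proof -
      have "real k / p \<le> 2/3" using key[OF k] p by (simp add: field_simps)
      from M_bound[OF a _ this] k p show ?thesis unfolding s_def \<rho>_def N_def by auto
    qed
    have Mnn: "((real k / p) ^ k) powr (a - 1) \<ge> 0" for k by simp
    have "(\<Sum>k=1..n. (p gchoose k) * Beta (a * real k) (a * (p - real k)))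
        \<le> (\<Sum>k=1..n. 3 / \<rho> * p powr (1 - a) * s k)"
    proof (rule sum_mono)
      fix k assume k: "k \<in> {1..n}"
      have kb: "real k \<le> (p + 1) / 2" "k \<ge> 1" using key[OF k] k by auto
      have kp: "real k < p" using kb(1) p by (simp add: field_simps)
      have gn: "(p gchoose k) \<ge> 0" using gbin_nonneg1[of p k] kp p by auto
      have "(p gchoose k) * Beta (a * real k) (a * (p - real k))
          \<le> (p gchoose k) * (((real k / p) ^ k) powr (a - 1) * Beta (real k) (p - real k))"
        using beta_cmp[OF a kb(2) kp] gn by (rule mult_left_mono)
      also have "\<dots> = ((real k / p) ^ k) powr (a - 1) * ((p gchoose k) * Beta (real k) (p - real k))"
        by (simp only: ac_simps)
      also have "\<dots> = ((real k / p) ^ k) powr (a - 1) * (p / (real k * (p - real k)))"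
        using gbin_beta1[of p k] kb kp p by simp
      also have "\<dots> \<le> (p powr (1 - a) * (s k / \<rho>)) * 3"
      proof (rule mult_mono[OF Mb[OF k]])
        show "p / (real k * (p - real k)) \<le> 3"
        proof -
          have "p \<le> 3 * (p - real k)" using kb(1) p by (simp add: field_simps)
          also have "\<dots> \<le> 3 * (real k * (p - real k))"
          proof -
            have "1 * (p - real k) \<le> real k * (p - real k)"
              by (rule mult_right_mono) (use kb kp in auto)
            thus ?thesis by simp
          qed
          finally show ?thesis using kb kp by (simp add: divide_le_eq)
        qed
      qed (use kb kp p s0 r0 in auto)
      finally show "(p gchoose k) * Beta (a * real k) (a * (p - real k)) \<le> 3 / \<rho> * p powr (1 - a) * s k"
        by (simp add: algebra_simps)
    qed
    also have "\<dots> = 3 / \<rho> * p powr (1 - a) * (\<Sum>k=1..n. s k)" by (simp add: sum_distrib_left)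
    also have "\<dots> \<le> 3 / \<rho> * p powr (1 - a) * S1"
      unfolding S1_def using r0 sum_le_suminf[OF sum1, of "{1..n}"] s0 by (intro mult_left_mono) auto
    also have "\<dots> = (3 * S1 / \<rho>) * p powr (1 - a)" by simp
    also have "\<dots> \<le> (C * A1) * p powr (1 - a)" using C1 by (intro mult_right_mono) auto
    also have "\<dots> = C * (a * p) powr (1 - a)" unfolding A1_def by (simp only: powr_mult mult.assoc)
    finally show "(\<Sum>k=1..nat \<lfloor>(p + 1) / 2\<rfloor>. (p gchoose k) * Beta (a * real k) (a * (p - real k)))
              \<le> C * (a * p) powr (1 - a)" unfolding n_def .
    have "(\<Sum>k=0..<n. ((p - 2) gchoose k) * Beta (a * (real k + 1)) (a * (p - real k - 1)))
        \<le> (\<Sum>k=0..<n. 2 / \<rho> * p powr (- a) * s (Suc k))"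
    proof (rule sum_mono)
      fix k assume k0: "k \<in> {0..<n}"
      define j where "j = Suc k"
      have k: "j \<in> {1..n}" using k0 unfolding j_def by auto
      have kb: "real j \<le> (p + 1) / 2" "j \<ge> 1" using key[OF k] k by auto
      have kp: "real j < p" using kb(1) p by (simp add: field_simps)
      have e: "real k + 1 = real j" "p - real k - 1 = p - real j" "k = j - 1" unfolding j_def by auto
      have gn: "((p - 2) gchoose (j - 1)) \<ge> 0" using gbin_nonneg2[of p j] kb kp p by auto
      have "((p - 2) gchoose (j - 1)) * Beta (a * real j) (a * (p - real j))
          \<le> ((p - 2) gchoose (j - 1)) * (((real j / p) ^ j) powr (a - 1) * Beta (real j) (p - real j))"
        using beta_cmp[OF a kb(2) kp] gn by (rule mult_left_mono)
      also have "\<dots> = ((real j / p) ^ j) powr (a - 1) * (((p - 2) gchoose (j - 1)) * Beta (real j) (p - real j))"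
        by (simp only: ac_simps)
      also have "\<dots> = ((real j / p) ^ j) powr (a - 1) * (1 / (p - 1))"
        using gbin_beta2[of p j] kb kp p by simp
      also have "\<dots> \<le> (p powr (1 - a) * (s j / \<rho>)) * (2 / p)"
      proof (rule mult_mono[OF Mb[OF k]])
        show "1 / (p - 1) \<le> 2 / p" using p by (simp add: field_simps)
      qed (use kb kp p s0 r0 in auto)
      also have "\<dots> = 2 / \<rho> * (p powr (1 - a) / p) * s j" by (rule div_aux2)
      also have "p powr (1 - a) / p = p powr (- a)"
      proof -
        have "p powr (- a) = inverse (p powr a)" by (rule powr_minus)
        moreover have "p powr (1 - a) = p / p powr a" using powr_diff[of p 1 a] p by simp
        moreover have "p \<noteq> 0" using p by simp
        ultimately show ?thesis using div_aux by metis
      qed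
      finally show "((p - 2) gchoose k) * Beta (a * (real k + 1)) (a * (p - real k - 1)) \<le> 2 / \<rho> * p powr (- a) * s (Suc k)"
        unfolding e(1,2) unfolding j_def by simp
    qed
    also have "\<dots> = 2 / \<rho> * p powr (- a) * (\<Sum>k=0..<n. s (Suc k))" by (simp add: sum_distrib_left)
    also have "\<dots> \<le> 2 / \<rho> * p powr (- a) * S2"
      unfolding S2_def using r0 sum_le_suminf[OF sum2, of "{0..<n}"] s0 by (intro mult_left_mono) auto
    also have "\<dots> = (2 * S2 / \<rho>) * p powr (- a)" by simp
    also have "\<dots> \<le> (C * A2) * p powr (- a)" using C2 by (intro mult_right_mono) auto
    also have "\<dots> = C * (a * p) powr (- a)" unfolding A2_def by (simp only: powr_mult mult.assoc)
    finally show "(\<Sum>k=0..<nat \<lfloor>(p + 1) / 2\<rfloor>. ((p - 2) gchoose k) * Beta (a * (real k + 1)) (a * (p - real k - 1)))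
              \<le> C * (a * p) powr (- a)" unfolding n_def .
  qed
qed


theorem lemma3p3:
  shows "(\<forall>p::real. p \<ge> 3 \<longrightarrow>
            (\<Sum>k=1..nat \<lfloor>(p + 1) / 2\<rfloor>. (p gchoose k) * Beta (real k) (p - real k)) \<le> 4 * ln p)
       \<and> (\<forall>a::real. a > 1 \<longrightarrow> (\<exists>C::real. C > 0 \<and> (\<forall>p::real. p \<ge> 3 \<longrightarrow>
            (\<Sum>k=1..nat \<lfloor>(p + 1) / 2\<rfloor>. (p gchoose k) * Beta (a * real k) (a * (p - real k)))
              \<le> C * (a * p) powr (1 - a)
          \<and> (\<Sum>k=0..<nat \<lfloor>(p + 1) / 2\<rfloor>. ((p - 2) gchoose k) * Beta (a * (real k + 1)) (a * (p - real k - 1)))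
              \<le> C * (a * p) powr (- a))))"
  using part1 part2 by blast

end
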